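(* Let $M,n\geq 3$ be integers with $n$ odd, and let $\beta$ be an integer with $0\leq\beta\leq n$ and $\beta\neq 1$. Then $(n-\beta,\beta)\in \mathrm{HWP}(C_M[n];M,Mn)$; that is, $C_M[n]$ can be factorized into $n-\beta$ $C_M$-factors and $\beta$ $C_{Mn}$-factors.
   Context: $C_M[n]$ denotes the lexicographic product of the $M$-cycle with the empty graph on $n$ vertices: vertex set $\mathbb Z_M\times\mathbb Z_n$, with $(i,x)(j,y)$ an edge iff $j-i\equiv\pm1\pmod M$. A $C_k$-factor of a graph $G$ is a spanning subgraph of $G$ all of whose components are cycles of length $k$. For a graph $G$ and integers $M,N\ge3$, $\mathrm{HWP}(G;M,N)$ is the set of pairs $(\alpha,\beta)$ of nonnegative integers such that $G$ admits a set of $\alpha$ $C_M$-factors and $\beta$ $C_N$-factors whose edge sets partition $E(G)$. *)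

theory Defs
  imports Main
begin

text \<open>Graphs are given by a vertex set V and a set E of edges, each edge being a
two-element set of vertices.\<close>

definition cycle_edges :: "'a list \<Rightarrow> 'a set set" where
  "cycle_edges vs = {{vs ! t, vs ! (Suc t mod length vs)} | t. t < length vs}"

definition is_cycle_factor :: "'a set \<Rightarrow> 'a set set \<Rightarrow> nat \<Rightarrow> 'a set set \<Rightarrow> bool" where
  "is_cycle_factor V E k F \<longleftrightarrow> F \<subseteq> E \<and>
     (\<exists>Cs :: 'a list set.
        (\<forall>c\<in>Cs. distinct c \<and> length c = k \<and> set c \<subseteq> V) \<and>
        (\<forall>c\<in>Cs. \<forall>d\<in>Cs. c \<noteq> d \<longrightarrow> set c \<inter> set d = {}) \<and>
        (\<Union>c\<in>Cs. set c) = V \<and>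
        F = (\<Union>c\<in>Cs. cycle_edges c))"

definition HWP :: "'a set \<Rightarrow> 'a set set \<Rightarrow> nat \<Rightarrow> nat \<Rightarrow> (nat \<times> nat) set" where
  "HWP V E M N = {(\<alpha>, \<beta>). \<exists>Fs :: nat \<Rightarrow> 'a set set.
       (\<forall>i<\<alpha>. is_cycle_factor V E M (Fs i)) \<and>
       (\<forall>i. \<alpha> \<le> i \<and> i < \<alpha> + \<beta> \<longrightarrow> is_cycle_factor V E N (Fs i)) \<and>
       (\<forall>i<\<alpha> + \<beta>. \<forall>j<\<alpha> + \<beta>. i \<noteq> j \<longrightarrow> Fs i \<inter> Fs j = {}) \<and>
       (\<Union>i<\<alpha> + \<beta>. Fs i) = E}"

text \<open>The lexicographic product C_M[n]: vertices Z_M x Z_n (as pairs of naturals below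
M resp. n); (i,x)(j,y) is an edge iff j - i = +-1 (mod M).\<close>
definition CMn_vertices :: "nat \<Rightarrow> nat \<Rightarrow> (nat \<times> nat) set" where
  "CMn_vertices M n = {0..<M} \<times> {0..<n}"

definition CMn_edges :: "nat \<Rightarrow> nat \<Rightarrow> (nat \<times> nat) set set" where
  "CMn_edges M n = {{(i, x), (j, y)} | i x j y.
      i < M \<and> x < n \<and> j < M \<and> y < n \<and>
      ((j + M - i) mod M = 1 \<or> (j + M - i) mod M = M - 1)}"

end

theory Submission
  imports Defs "HOL-Number_Theory.Cong"
begin


lemma mod_step1:
  fixes i j M :: nat
  assumes "i < M" "j < M" "(j + M - i) mod M = 1" "M \<ge> 3"
  shows "j = Suc i mod M"
proof (cases "i \<le> j")
  case True
  then have "j + M - i = (j - i) + M" by simp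
  then have "(j - i) mod M = 1" using assms(3) by simp
  then have "j - i = 1" using assms by simp
  then show ?thesis using True assms by (auto simp: mod_Suc)
next
  case False
  then have "(j + M - i) < M" using assms(1) by linarith
  then have "j + M - i = 1" using assms(3) by simp
  then show ?thesis using False assms by (auto simp: mod_Suc)
qed

lemma mod_step2:
  fixes i j M :: nat
  assumes "i < M" "j < M" "(j + M - i) mod M = M - 1" "M \<ge> 3"
  shows "i = Suc j mod M"
proof (cases "i \<le> j")
  case True
  then have "j + M - i = (j - i) + M" by simp
  then have "(j - i) mod M = M - 1" using assms(3) by simp
  then have "j - i = M - 1" using assms by simp
  then show ?thesis using True assms by (auto simp: mod_Suc)
next
  case False
  then have "(j + M - i) < M" using assms(1) by linarith
  then have "j + M - i = M - 1" using assms(3) by simp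
  then show ?thesis using False assms by (auto simp: mod_Suc)
qed

lemma suc_mod_cases: "i < (M::nat) \<Longrightarrow> (Suc i < M \<and> Suc i mod M = Suc i) \<or> (Suc i = M \<and> Suc i mod M = 0)"
proof (cases "Suc i < M")
  case True then show ?thesis by simp
next
  case False
  assume "i < M"
  then have "Suc i = M" using False by simp
  then show ?thesis by simp
qed

lemma step_in_E:
  fixes i M :: nat
  assumes "i < M" "M \<ge> 3"
  shows "(Suc i mod M + M - i) mod M = 1"
  using suc_mod_cases[OF assms(1)]
proof
  assume a: "Suc i < M \<and> Suc i mod M = Suc i"
  then have "Suc i mod M + M - i = 1 + M" by simp
  moreover have "(1 + M) mod M = 1 mod M" by (rule mod_add_self2)
  ultimately show ?thesis using assms by simp
next
  assume a: "Suc i = M \<and> Suc i mod M = 0"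
  then have "Suc i = M" "Suc i mod M = 0" by auto
  then have "Suc i mod M + M - i = 1" by linarith
  then show ?thesis using assms by simp
qed

lemma no_two_cycle:
  fixes i j M :: nat
  assumes "i < M" "j < M" "i = Suc j mod M" "j = Suc i mod M" "M \<ge> 3"
  shows False
proof -
  have A: "i = Suc j \<or> (Suc j = M \<and> i = 0)" using suc_mod_cases[OF assms(2)] assms(3) by metis
  have B: "j = Suc i \<or> (Suc i = M \<and> j = 0)" using suc_mod_cases[OF assms(1)] assms(4) by metis
  from A B assms(5) show False by linarith
qed

lemma coprime_n2: "odd (n::nat) \<Longrightarrow> n \<ge> 3 \<Longrightarrow> coprime (n - 2) n"
proof -
  assume a: "odd n" "n \<ge> 3"
  have g: "gcd (n - 2) ((n - 2) + 2) = gcd (n - 2) 2" by (rule gcd_add2)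
  have e: "(n - 2) + 2 = n" using a by simp
  have "odd (n - 2)" using a by simp
  then have "coprime (n - 2) 2" by simp
  then have "gcd (n - 2) 2 = 1" by (simp add: coprime_iff_gcd_eq_1)
  then have "gcd (n - 2) n = 1" using g e by simp
  then show ?thesis by (simp add: coprime_iff_gcd_eq_1)
qed

locale lay =
  fixes M n :: nat and A :: "nat \<Rightarrow> nat \<Rightarrow> nat"
  assumes M3: "M \<ge> 3" and n0: "n > 0"
    and Abij: "\<And>i. i < M \<Longrightarrow> bij_betw (A i) {..<n} {..<n}"
begin

definition stp :: "nat \<Rightarrow> nat \<times> nat \<Rightarrow> nat \<times> nat" where
  "stp k v = (Suc (fst v) mod M, (snd v + A (fst v) k) mod n)"

definition F :: "nat \<Rightarrow> (nat \<times> nat) set set" where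
  "F k = {{v, stp k v} | v. v \<in> CMn_vertices M n}"

definition P :: "nat \<Rightarrow> nat \<Rightarrow> nat" where
  "P k i = (\<Sum>j<i. A j k)"

lemma A_lt: "i < M \<Longrightarrow> k < n \<Longrightarrow> A i k < n"
  using Abij bij_betw_apply by fastforce

lemma A_inj: "i < M \<Longrightarrow> k < n \<Longrightarrow> k' < n \<Longrightarrow> A i k = A i k' \<Longrightarrow> k = k'"
  using Abij unfolding bij_betw_def inj_on_def by blast

lemma A_surj: "i < M \<Longrightarrow> t < n \<Longrightarrow> \<exists>k<n. A i k = t"
  using Abij unfolding bij_betw_def by (metis imageE lessThan_iff)

lemma F_sub: "F k \<subseteq> CMn_edges M n"
proof
  fix e assume "e \<in> F k"
  then obtain i y where iy: "i < M" "y < n" "e = {(i, y), stp k (i, y)}"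
    by (auto simp: F_def CMn_vertices_def)
  have 1: "(Suc i mod M + M - i) mod M = 1" using step_in_E iy M3 by blast
  have 2: "Suc i mod M < M" using M3 by simp
  have 3: "(y + A i k) mod n < n" using n0 by simp
  have "{(i, y), stp k (i, y)} \<in> CMn_edges M n" unfolding CMn_edges_def stp_def
    apply (rule CollectI)
    apply (rule exI[of _ i], rule exI[of _ y], rule exI[of _ "Suc i mod M"], rule exI[of _ "(y + A i k) mod n"])
    using iy 1 2 3 by simp
  then show "e \<in> CMn_edges M n" using iy by simp
qed

lemma F_disj: assumes "k < n" "k' < n" "k \<noteq> k'" shows "F k \<inter> F k' = {}"
proof (rule ccontr)
  assume "F k \<inter> F k' \<noteq> {}"
  then obtain i y i' y' where iy: "i < M" "y < n" "i' < M" "y' < n"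
    and eq: "{(i, y), stp k (i, y)} = {(i', y'), stp k' (i', y')}"
    by (auto simp: F_def CMn_vertices_def)
  from eq consider "(i, y) = (i', y')" "stp k (i, y) = stp k' (i', y')"
    | "(i, y) = stp k' (i', y')" "stp k (i, y) = (i', y')"
    by (auto simp: doubleton_eq_iff)
  then show False
  proof cases
    case 1
    then have "(y + A i k) mod n = (y + A i k') mod n" by (simp add: stp_def)
    then have "[A i k = A i k'] (mod n)" by (simp add: cong_def[symmetric] cong_add_lcancel_nat)
    then have "A i k = A i k'" using A_lt iy assms cong_less_modulus_unique_nat by blast
    then show False using A_inj iy assms by blast
  next
    case 2
    then have "i = Suc i' mod M" "i' = Suc i mod M" by (auto simp: stp_def)
    then show False using no_two_cycle iy M3 by blast
  qed
qed

lemma F_hit: assumes "i < M" "x < n" "y < n"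
  shows "\<exists>k<n. stp k (i, x) = (Suc i mod M, y)"
proof -
  have "(y + n - x) mod n < n" using n0 by simp
  then obtain k where k: "k < n" "A i k = (y + n - x) mod n"
    using A_surj assms(1) by blast
  have "(x + (y + n - x) mod n) mod n = (x + (y + n - x)) mod n" by (simp add: mod_add_right_eq)
  also have "x + (y + n - x) = y + n" using assms by simp
  finally have "(x + A i k) mod n = y" using k assms by simp
  then show ?thesis using k by (auto simp: stp_def)
qed

lemma F_union: "(\<Union>k<n. F k) = CMn_edges M n"
proof
  show "(\<Union>k<n. F k) \<subseteq> CMn_edges M n" using F_sub by blast
next
  show "CMn_edges M n \<subseteq> (\<Union>k<n. F k)"
  proof
    fix e assume "e \<in> CMn_edges M n"
    then obtain i x j y where e: "e = {(i, x), (j, y)}" "i < M" "x < n" "j < M" "y < n"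
      and c: "(j + M - i) mod M = 1 \<or> (j + M - i) mod M = M - 1"
      unfolding CMn_edges_def by blast
    from c show "e \<in> (\<Union>k<n. F k)"
    proof
      assume "(j + M - i) mod M = 1"
      then have "j = Suc i mod M" using mod_step1 e M3 by blast
      then obtain k where "k < n" "stp k (i, x) = (j, y)" using F_hit e by blast
      then show ?thesis using e by (auto simp: F_def CMn_vertices_def)
    next
      assume "(j + M - i) mod M = M - 1"
      then have "i = Suc j mod M" using mod_step2 e M3 by blast
      then obtain k where k: "k < n" "stp k (j, y) = (i, x)" using F_hit e by blast
      have "e = {(j, y), stp k (j, y)}" using e k by auto
      then show ?thesis using e k by (auto simp: F_def CMn_vertices_def)
    qed
  qed
qed

lemma cyc_edges:
  assumes "\<forall>t<length c. c ! (Suc t mod length c) = stp k (c ! t)"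
  shows "cycle_edges c = {{v, stp k v} | v. v \<in> set c}"
proof -
  have "cycle_edges c = (\<lambda>t. {c!t, c ! (Suc t mod length c)}) ` {..<length c}"
    unfolding cycle_edges_def by blast
  also have "\<dots> = (\<lambda>t. {c!t, stp k (c ! t)}) ` {..<length c}"
    using assms by (intro image_cong) auto
  also have "\<dots> = (\<lambda>v. {v, stp k v}) ` ((\<lambda>t. c!t) ` {..<length c})"
    by (simp add: image_image)
  also have "(\<lambda>t. c!t) ` {..<length c} = set c"
    unfolding set_eq_iff image_iff in_set_conv_nth lessThan_iff by (auto intro!: bexI)
  finally show ?thesis by blast
qed

lemma factor_from_cycles:
  assumes "\<forall>c\<in>Cs. distinct c \<and> length c = L \<and> set c \<subseteq> CMn_vertices M n"
    and "\<forall>c\<in>Cs. \<forall>d\<in>Cs. c \<noteq> d \<longrightarrow> set c \<inter> set d = {}"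
    and "(\<Union>c\<in>Cs. set c) = CMn_vertices M n"
    and "\<forall>c\<in>Cs. \<forall>t<length c. c ! (Suc t mod length c) = stp k (c ! t)"
  shows "is_cycle_factor (CMn_vertices M n) (CMn_edges M n) L (F k)"
proof -
  have "(\<Union>c\<in>Cs. cycle_edges c) = (\<Union>c\<in>Cs. {{v, stp k v} | v. v \<in> set c})"
    by (rule SUP_cong[OF refl]) (use cyc_edges assms(4) in blast)
  also have "\<dots> = {{v, stp k v} | v. v \<in> (\<Union>c\<in>Cs. set c)}" by blast
  also have "\<dots> = F k" using assms(3) by (simp add: F_def)
  finally show ?thesis unfolding is_cycle_factor_def using F_sub assms(1-3) by blast
qed

end



context lay begin

lemma P_Suc: "P k (Suc i) = P k i + A i k" by (simp add: P_def)
lemma P_0: "P k 0 = 0" by (simp add: P_def)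

definition cycM :: "nat \<Rightarrow> nat \<Rightarrow> (nat \<times> nat) list" where
  "cycM k x = map (\<lambda>i. (i, (x + P k i) mod n)) [0..<M]"

lemma hit_val: assumes "y < n" shows "((y + n - p mod n) mod n + p) mod n = y"
proof -
  have "((y + n - p mod n) mod n + p) mod n = ((y + n - p mod n) + p mod n) mod n"
    by (simp add: mod_add_left_eq mod_add_right_eq)
  also have "(y + n - p mod n) + p mod n = y + n" using n0
    by (metis le_add2 le_add_diff_inverse2 less_imp_le_nat mod_less_divisor order_trans)
  finally show ?thesis using assms by simp
qed

lemma Mfactor: assumes "k < n" "P k M mod n = 0"
  shows "is_cycle_factor (CMn_vertices M n) (CMn_edges M n) M (F k)"
proof (rule factor_from_cycles[where Cs = "cycM k ` {..<n}"])
  show "\<forall>c\<in>cycM k ` {..<n}. distinct c \<and> length c = M \<and> set c \<subseteq> CMn_vertices M n"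
    using n0 by (auto simp: cycM_def distinct_map inj_on_def CMn_vertices_def)
  show "\<forall>c\<in>cycM k ` {..<n}. \<forall>d\<in>cycM k ` {..<n}. c \<noteq> d \<longrightarrow> set c \<inter> set d = {}"
  proof (intro ballI impI)
    fix c d assume c: "c \<in> cycM k ` {..<n}" and d: "d \<in> cycM k ` {..<n}" and cd: "c \<noteq> d"
    then obtain x x' where xx: "x < n" "x' < n" "c = cycM k x" "d = cycM k x'" by auto
    show "set c \<inter> set d = {}"
    proof (rule ccontr)
      assume "set c \<inter> set d \<noteq> {}"
      then obtain i where "(x + P k i) mod n = (x' + P k i) mod n" using xx by (auto simp: cycM_def)
      then have "[x + P k i = x' + P k i] (mod n)" by (simp add: cong_def)
      then have "[x = x'] (mod n)" using cong_add_rcancel_nat by blast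
      then have "x = x'" using xx cong_less_modulus_unique_nat by blast
      then show False using xx cd by simp
    qed
  qed
  show "(\<Union>c\<in>cycM k ` {..<n}. set c) = CMn_vertices M n"
  proof
    show "(\<Union>c\<in>cycM k ` {..<n}. set c) \<subseteq> CMn_vertices M n"
      using n0 by (auto simp: cycM_def CMn_vertices_def)
    show "CMn_vertices M n \<subseteq> (\<Union>c\<in>cycM k ` {..<n}. set c)"
    proof
      fix v assume "v \<in> CMn_vertices M n"
      then obtain i y where v: "v = (i, y)" "i < M" "y < n" by (auto simp: CMn_vertices_def)
      define x where "x = (y + n - P k i mod n) mod n"
      have x: "x < n" using n0 by (simp add: x_def)
      have "(x + P k i) mod n = y" unfolding x_def using hit_val v by blast
      then have "v \<in> set (cycM k x)" using v by (auto simp: cycM_def image_iff)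
      then show "v \<in> (\<Union>c\<in>cycM k ` {..<n}. set c)" using x by blast
    qed
  qed
  show "\<forall>c\<in>cycM k ` {..<n}. \<forall>t<length c. c ! (Suc t mod length c) = stp k (c ! t)"
  proof (intro ballI allI impI)
    fix c t assume c: "c \<in> cycM k ` {..<n}" and t: "t < length c"
    then obtain x where x: "x < n" "c = cycM k x" by auto
    have tM: "t < M" using t x by (simp add: cycM_def)
    have sM: "Suc t mod M < M" using M3 by simp
    have key: "(x + P k (Suc t mod M)) mod n = ((x + P k t) mod n + A t k) mod n"
    proof -
      have r: "((x + P k t) mod n + A t k) mod n = (x + P k (Suc t)) mod n"
        by (simp add: P_Suc mod_add_left_eq add.assoc)
      show ?thesis using suc_mod_cases[OF tM]
      proof
        assume "Suc t < M \<and> Suc t mod M = Suc t"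
        then show ?thesis using r by simp
      next
        assume a: "Suc t = M \<and> Suc t mod M = 0"
        then have "(x + P k (Suc t)) mod n = (x + P k M mod n) mod n" by (simp add: mod_add_right_eq)
        then show ?thesis using r a assms(2) P_0 by simp
      qed
    qed
    have "c ! t = (t, (x + P k t) mod n)" using x tM by (simp add: cycM_def)
    moreover have "c ! (Suc t mod length c) = (Suc t mod M, (x + P k (Suc t mod M)) mod n)"
      using x sM by (simp add: cycM_def)
    ultimately show "c ! (Suc t mod length c) = stp k (c ! t)" using key by (simp add: stp_def)
  qed
qed

definition gg :: "nat \<Rightarrow> nat \<Rightarrow> nat \<times> nat" where
  "gg k t = (t mod M, (t div M * P k M + P k (t mod M)) mod n)"

lemma gg_step: "gg k (Suc t) = stp k (gg k t)"
proof -
  have tM: "t mod M < M" using M3 by simp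
  define q where "q = t div M"
  define r where "r = t mod M"
  have m1: "Suc t mod M = Suc r mod M" by (simp add: r_def mod_Suc_eq)
  have rhs: "((q * P k M + P k r) mod n + A r k) mod n = (q * P k M + P k (Suc r)) mod n"
    by (simp add: P_Suc mod_add_left_eq add.assoc)
  show ?thesis using suc_mod_cases[OF tM]
  proof
    assume a: "Suc (t mod M) < M \<and> Suc (t mod M) mod M = Suc (t mod M)"
    then have "Suc t mod M = Suc r" using m1 r_def by simp
    moreover then have "Suc t div M = q" by (simp add: div_Suc q_def)
    ultimately show ?thesis using rhs a by (simp add: gg_def stp_def q_def r_def)
  next
    assume a: "Suc (t mod M) = M \<and> Suc (t mod M) mod M = 0"
    then have s0: "Suc t mod M = 0" using m1 r_def by simp
    then have "Suc t div M = Suc q" by (simp add: div_Suc q_def)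
    then have "gg k (Suc t) = (0, (q * P k M + P k M) mod n)" using s0 P_0 by (simp add: gg_def add.commute)
    moreover have "stp k (gg k t) = (0, (q * P k M + P k M) mod n)"
      using rhs a by (simp add: gg_def stp_def q_def r_def)
    ultimately show ?thesis by simp
  qed
qed

lemma gg_per: "gg k (t + M * n) = gg k t"
proof -
  have M0: "M > 0" using M3 by simp
  have 1: "(t + M * n) mod M = t mod M" by simp
  have 2: "(t + M * n) div M = t div M + n" using M0 by simp
  have "((t div M + n) * P k M + P k (t mod M)) mod n
      = ((t div M * P k M + P k (t mod M)) + n * P k M) mod n" by (simp add: algebra_simps)
  also have "\<dots> = (t div M * P k M + P k (t mod M)) mod n" by simp
  finally show ?thesis using 1 2 by (simp add: gg_def)
qed

lemma Mnfactor: assumes "k < n" "coprime (P k M) n"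
  shows "is_cycle_factor (CMn_vertices M n) (CMn_edges M n) (M * n) (F k)"
proof (rule factor_from_cycles[where Cs = "{map (gg k) [0..<M * n]}"])
  let ?c = "map (gg k) [0..<M * n]"
  have M0: "M > 0" using M3 by simp
  have inj: "inj_on (gg k) {0..<M * n}"
  proof (rule inj_onI)
    fix t t' assume t: "t \<in> {0..<M * n}" and t': "t' \<in> {0..<M * n}" and e: "gg k t = gg k t'"
    have r: "t mod M = t' mod M" using e by (simp add: gg_def)
    have "(t div M * P k M + P k (t mod M)) mod n = (t' div M * P k M + P k (t mod M)) mod n"
      using e r by (simp add: gg_def)
    then have "[t div M * P k M + P k (t mod M) = t' div M * P k M + P k (t mod M)] (mod n)"
      by (simp add: cong_def)
    then have "[t div M * P k M = t' div M * P k M] (mod n)" using cong_add_rcancel_nat by blast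
    then have "[t div M = t' div M] (mod n)" using cong_mult_rcancel_nat assms(2) by blast
    moreover have "t div M < n" using t less_mult_imp_div_less[of t n M] by (simp add: mult.commute)
    moreover have "t' div M < n" using t' less_mult_imp_div_less[of t' n M] by (simp add: mult.commute)
    ultimately have "t div M = t' div M" using cong_less_modulus_unique_nat by blast
    then show "t = t'" using r by (metis div_mult_mod_eq)
  qed
  have sub: "set ?c \<subseteq> CMn_vertices M n"
    using M0 n0 by (auto simp: gg_def CMn_vertices_def)
  have dist: "distinct ?c" using inj by (simp add: distinct_map)
  have "card (set ?c) = M * n" using dist distinct_card by fastforce
  moreover have "card (CMn_vertices M n) = M * n" by (simp add: CMn_vertices_def card_cartesian_product)
  ultimately have seq: "set ?c = CMn_vertices M n"
    using sub card_subset_eq[of "CMn_vertices M n" "set ?c"] by (simp add: CMn_vertices_def)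
  show "\<forall>c\<in>{?c}. distinct c \<and> length c = M * n \<and> set c \<subseteq> CMn_vertices M n"
    using dist sub by simp
  show "\<forall>c\<in>{?c}. \<forall>d\<in>{?c}. c \<noteq> d \<longrightarrow> set c \<inter> set d = {}" by simp
  show "(\<Union>c\<in>{?c}. set c) = CMn_vertices M n" using seq by simp
  show "\<forall>c\<in>{?c}. \<forall>t<length c. c ! (Suc t mod length c) = stp k (c ! t)"
  proof (intro ballI allI impI)
    fix c t assume c: "c \<in> {?c}" and t: "t < length c"
    then have tt: "t < M * n" "c = ?c" by auto
    have ct: "c ! t = gg k t" using tt by simp
    show "c ! (Suc t mod length c) = stp k (c ! t)"
    proof (cases "Suc t < M * n")
      case True
      then show ?thesis using tt ct gg_step by simp
    next
      case False
      then have S: "Suc t = M * n" using tt by simp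
      have L: "length c = M * n" using tt by simp
      have "c ! (Suc t mod length c) = c ! 0" using L S by simp
      also have "\<dots> = gg k 0" using tt M0 n0 by simp
      also have "\<dots> = gg k (Suc t)" using gg_per[of k 0] S by simp
      also have "\<dots> = stp k (c ! t)" using gg_step ct by simp
      finally show ?thesis .
    qed
  qed
qed

end



definition ee :: "nat \<Rightarrow> nat \<Rightarrow> nat" where
 "ee \<beta> j = (if odd \<beta> \<and> j = 0 then 1 else if odd \<beta> \<and> j = 1 then 2 else if odd \<beta> \<and> j = 2 then 0
   else if even (j + \<beta>) then j + 1 else j - 1)"

lemma ee_lt: "\<beta> \<noteq> 1 \<Longrightarrow> j < \<beta> \<Longrightarrow> ee \<beta> j < \<beta>"
  unfolding ee_def by presburger

lemma ee_move: "\<beta> \<noteq> 1 \<Longrightarrow> j < \<beta> \<Longrightarrow>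
   ee \<beta> j = j + 1 \<or> ee \<beta> j + 1 = j \<or> ee \<beta> j + 2 = j"
  unfolding ee_def by presburger
lemma ee_cases: "j < \<beta> \<Longrightarrow> 
   (odd \<beta> \<and> j < 3 \<and> ee \<beta> j = (j + 1) mod 3) \<or>
   (\<not> (odd \<beta> \<and> j < 3) \<and> even (j + \<beta>) \<and> ee \<beta> j = j + 1) \<or>
   (\<not> (odd \<beta> \<and> j < 3) \<and> odd (j + \<beta>) \<and> ee \<beta> j + 1 = j)"
  unfolding ee_def by auto

lemma ee_inj: assumes "\<beta> \<noteq> 1" "j < \<beta>" "j' < \<beta>" "ee \<beta> j = ee \<beta> j'" shows "j = j'"
proof -
  from ee_cases[OF assms(2)] ee_cases[OF assms(3)] assms(4) show ?thesis
    by (elim disjE; presburger)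
qed

definition dd :: "nat \<Rightarrow> nat \<Rightarrow> nat \<Rightarrow> nat" where
  "dd n \<beta> k = (if k < n - \<beta> then k else n - \<beta> + ee \<beta> (k - (n - \<beta>)))"

lemma dd_lt: assumes "\<beta> \<le> n" "\<beta> \<noteq> 1" "k < n" shows "dd n \<beta> k < n"
proof (cases "k < n - \<beta>")
  case True then show ?thesis using assms by (simp add: dd_def)
next
  case False
  then have "k - (n - \<beta>) < \<beta>" using assms by linarith
  then have "ee \<beta> (k - (n - \<beta>)) < \<beta>" using ee_lt assms by blast
  then show ?thesis using False assms by (simp add: dd_def)
qed

lemma dd_move: assumes "\<beta> \<le> n" "\<beta> \<noteq> 1" "n - \<beta> \<le> k" "k < n"
  shows "dd n \<beta> k = k + 1 \<or> dd n \<beta> k + 1 = k \<or> dd n \<beta> k + 2 = k"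
proof -
  have j: "k - (n - \<beta>) < \<beta>" using assms by linarith
  have d: "dd n \<beta> k = n - \<beta> + ee \<beta> (k - (n - \<beta>))" using assms by (simp add: dd_def)
  from ee_move[OF assms(2) j] show ?thesis unfolding d using assms by linarith
qed

lemma dd_fix: "k < n - \<beta> \<Longrightarrow> dd n \<beta> k = k" by (simp add: dd_def)

lemma dd_inj: assumes "\<beta> \<le> n" "\<beta> \<noteq> 1" "k < n" "k' < n" "dd n \<beta> k = dd n \<beta> k'"
  shows "k = k'"
proof -
  have c1: "dd n \<beta> k \<ge> n - \<beta>" if "\<not> k < n - \<beta>" for k using that by (simp add: dd_def)
  have c2: "k - (n - \<beta>) < \<beta>" if "k < n" "\<not> k < n - \<beta>" for k using assms(1) that by linarith
  have g: "(dd n \<beta> x < n - \<beta>) = (x < n - \<beta>)" for x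
  proof (cases "x < n - \<beta>")
    case True then show ?thesis using dd_fix[OF True] by simp
  next
    case False then show ?thesis using c1[OF False] by simp
  qed
  show ?thesis
  proof (cases "k < n - \<beta> \<or> k' < n - \<beta>")
    case True
    then have b: "k < n - \<beta>" "k' < n - \<beta>" using g[of k] g[of k'] assms(5) by metis+
    show ?thesis using dd_fix[OF b(1)] dd_fix[OF b(2)] assms(5) by linarith
  next
    case False
    then have a: "\<not> k < n - \<beta>" "\<not> k' < n - \<beta>" by auto
    have "n - \<beta> + ee \<beta> (k - (n - \<beta>)) = n - \<beta> + ee \<beta> (k' - (n - \<beta>))"
      using assms(5) a unfolding dd_def by simp
    then have "ee \<beta> (k - (n - \<beta>)) = ee \<beta> (k' - (n - \<beta>))" by simp
    moreover have "k - (n - \<beta>) < \<beta>" using c2[OF assms(3) a(1)] .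
    moreover have "k' - (n - \<beta>) < \<beta>" using c2[OF assms(4) a(2)] .
    ultimately have "k - (n - \<beta>) = k' - (n - \<beta>)" using ee_inj[OF assms(2)] by blast
    then show ?thesis using a by linarith
  qed
qed

lemma dd_bij: assumes "\<beta> \<le> n" "\<beta> \<noteq> 1" shows "bij_betw (dd n \<beta>) {..<n} {..<n}"
proof -
  have i: "inj_on (dd n \<beta>) {..<n}" using dd_inj assms by (auto intro: inj_onI)
  have s: "dd n \<beta> ` {..<n} \<subseteq> {..<n}" using dd_lt assms by auto
  show ?thesis unfolding bij_betw_def using i endo_inj_surj[OF _ s i] by simp
qed

lemma mul_bij: fixes c n :: nat assumes "coprime c n" "n > 0" shows "bij_betw (\<lambda>k. (c * k) mod n) {..<n} {..<n}"
proof -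
  have i: "inj_on (\<lambda>k. (c * k) mod n) {..<n}"
  proof (rule inj_onI)
    fix x y assume "x \<in> {..<n}" "y \<in> {..<n}" "(c * x) mod n = (c * y) mod n"
    then have "[c * x = c * y] (mod n)" "x < n" "y < n" by (auto simp: cong_def)
    then show "x = y" using cong_mult_lcancel_nat assms(1) cong_less_modulus_unique_nat by blast
  qed
  have s: "(\<lambda>k. (c * k) mod n) ` {..<n} \<subseteq> {..<n}" using assms by auto
  show ?thesis unfolding bij_betw_def using i endo_inj_surj[OF _ s i] by simp
qed

definition cc :: "nat \<Rightarrow> nat \<Rightarrow> nat \<Rightarrow> nat" where
  "cc n M j = (if j = 0 then (if odd M then n - 2 else n - 1) else if odd j then 1 else n - 1)"

definition AA :: "nat \<Rightarrow> nat \<Rightarrow> nat \<Rightarrow> nat \<Rightarrow> nat \<Rightarrow> nat" where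
  "AA n M \<beta> i k = (if i = 0 then dd n \<beta> k else (cc n M (i - 1) * k) mod n)"

lemma cc_coprime: assumes "odd n" "n \<ge> 3" shows "coprime (cc n M j) n"
proof -
  have "coprime (n - 1) n" using coprime_diff_one_left_nat[of n] assms by simp
  then show ?thesis using coprime_n2[OF assms] by (simp add: cc_def)
qed

lemma cc_sum: "n > 0 \<Longrightarrow> m \<ge> 1 \<Longrightarrow> [(\<Sum>i<m. cc n M i) = cc n M 0 + (if even m then 1 else 0)] (mod n)"
proof (induction m)
  case 0 then show ?case by simp
next
  case (Suc m)
  show ?case
  proof (cases "m = 0")
    case True then show ?thesis by simp
  next
    case False
    then have IH: "[(\<Sum>i<m. cc n M i) = cc n M 0 + (if even m then 1 else 0)] (mod n)"
      using Suc by simp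
    have "(\<Sum>i<Suc m. cc n M i) = (\<Sum>i<m. cc n M i) + cc n M m" by simp
    moreover have "[(\<Sum>i<m. cc n M i) + cc n M m = cc n M 0 + (if even m then 1 else 0) + cc n M m] (mod n)"
      using IH by (rule cong_add) simp
    moreover have "[cc n M 0 + (if even m then 1 else 0) + cc n M m = cc n M 0 + (if even (Suc m) then 1 else 0)] (mod n)"
    proof (cases "even m")
      case True
      then have "cc n M m = n - 1" using False by (simp add: cc_def)
      then have E: "cc n M 0 + 1 + cc n M m = cc n M 0 + n"
        using True Suc False by (cases n) auto
      have "[cc n M 0 + 1 + cc n M m = cc n M 0] (mod n)" unfolding E by (simp add: cong_def)
      then show ?thesis using True by simp
    next
      case f: False
      then have "cc n M m = 1" using False by (simp add: cc_def)
      then show ?thesis using f by simp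
    qed
    ultimately show ?thesis using cong_trans by metis
  qed
qed

lemma cc_total: assumes "M \<ge> 3" "n \<ge> 3" shows "[(\<Sum>i<M - 1. cc n M i) = n - 1] (mod n)"
proof -
  have "[(\<Sum>i<M - 1. cc n M i) = cc n M 0 + (if even (M - 1) then 1 else 0)] (mod n)"
    using cc_sum[of n "M - 1" M] assms by simp
  moreover have E: "cc n M 0 + (if even (M - 1) then 1 else 0) = n - 1"
    using assms by (cases "even M") (auto simp: cc_def)
  ultimately show ?thesis by (simp only: E)
qed

lemma P_total: assumes "M \<ge> 3" "n \<ge> 3"
  shows "[(\<Sum>j<M. AA n M \<beta> j k) + k = dd n \<beta> k] (mod n)"
proof -
  have M: "M = Suc (M - 1)" using assms by simp
  have "(\<Sum>j<M. AA n M \<beta> j k) = AA n M \<beta> 0 k + (\<Sum>j<M - 1. AA n M \<beta> (Suc j) k)"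
    by (subst M, subst sum.lessThan_Suc_shift) simp
  also have "\<dots> = dd n \<beta> k + (\<Sum>j<M - 1. (cc n M j * k) mod n)" by (simp add: AA_def)
  finally have e: "(\<Sum>j<M. AA n M \<beta> j k) = dd n \<beta> k + (\<Sum>j<M - 1. (cc n M j * k) mod n)" .
  have "[(\<Sum>j<M - 1. (cc n M j * k) mod n) = (\<Sum>j<M - 1. cc n M j * k)] (mod n)"
    by (rule cong_sum) simp
  also have "(\<Sum>j<M - 1. cc n M j * k) = (\<Sum>j<M - 1. cc n M j) * k" by (simp add: sum_distrib_right)
  also have "[(\<Sum>j<M - 1. cc n M j) * k = (n - 1) * k] (mod n)"
    using cc_total[OF assms] by (rule cong_mult) simp
  finally have c: "[(\<Sum>j<M - 1. (cc n M j * k) mod n) + k = (n - 1) * k + k] (mod n)"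
    by (rule cong_add) simp
  have "(n - 1) * k + k = n * k" using assms by (cases n) auto
  then have "[(n - 1) * k + k = 0] (mod n)" by (simp add: cong_def)
  with c have "[(\<Sum>j<M - 1. (cc n M j * k) mod n) + k = 0] (mod n)" using cong_trans by blast
  then have "[dd n \<beta> k + ((\<Sum>j<M - 1. (cc n M j * k) mod n) + k) = dd n \<beta> k + 0] (mod n)"
    by (rule cong_add[OF cong_refl])
  then show ?thesis using e by (simp add: add.assoc)
qed

lemma neg_res: fixes p r n :: nat assumes "[p + r = 0] (mod n)" "0 < r" "r \<le> n"
  shows "p mod n = n - r"
proof -
  have n0: "n > 0" using assms(2,3) by linarith
  have "(p mod n + r) mod n = 0" using assms(1) by (simp add: cong_def mod_add_left_eq)
  moreover have "p mod n < n" using n0 by simp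
  ultimately show ?thesis
  proof (cases "p mod n + r < n")
    case True
    then have "(p mod n + r) mod n = p mod n + r" by simp
    then show ?thesis using \<open>(p mod n + r) mod n = 0\<close> assms(2) by simp
  next
    case False
    then have "(p mod n + r) mod n = p mod n + r - n"
      using \<open>p mod n < n\<close> assms(3) by (simp add: le_mod_geq)
    then show ?thesis using \<open>(p mod n + r) mod n = 0\<close> False by simp
  qed
qed

lemma zero_of: fixes p k n :: nat assumes "[p + k = k] (mod n)" shows "p mod n = 0"
proof -
  have "[p + k = 0 + k] (mod n)" using assms by simp
  then have "[p = 0] (mod n)" using cong_add_rcancel_nat by blast
  then show ?thesis by (simp add: cong_def)
qed

lemma unit_of: fixes p k n d :: nat
  assumes "n \<ge> 3" "odd n" "[p + k = d] (mod n)" "d = k + 1 \<or> d + 1 = k \<or> d + 2 = k"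
  shows "coprime p n"
proof -
  have n0: "n > 0" using assms(1) by linarith
  from assms(4) have "p mod n = 1 \<or> p mod n = n - 1 \<or> p mod n = n - 2"
  proof (elim disjE)
    assume "d = k + 1"
    then have "[p + k = 1 + k] (mod n)" using assms(3) by simp
    then have "[p = 1] (mod n)" using cong_add_rcancel_nat by blast
    then have "p mod n = 1 mod n" by (simp add: cong_def)
    then show ?thesis using assms(1) by simp
  next
    assume h: "d + 1 = k"
    have "p + k = (p + 1) + d" using h by simp
    then have "[(p + 1) + d = 0 + d] (mod n)" using assms(3) by simp
    then have "[p + 1 = 0] (mod n)" using cong_add_rcancel_nat by blast
    then have "p mod n = n - 1" using neg_res[of p 1 n] assms(1) by simp
    then show ?thesis by simp
  next
    assume h: "d + 2 = k"
    have "p + k = (p + 2) + d" using h by simp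
    then have "[(p + 2) + d = 0 + d] (mod n)" using assms(3) by simp
    then have "[p + 2 = 0] (mod n)" using cong_add_rcancel_nat by blast
    then have "p mod n = n - 2" using neg_res[of p 2 n] assms(1) by simp
    then show ?thesis by simp
  qed
  moreover have "coprime (1::nat) n" by simp
  moreover have "coprime (n - 1) n" using coprime_diff_one_left_nat[of n] n0 by simp
  moreover have "coprime (n - 2) n" using coprime_n2 assms by simp
  ultimately have "coprime (p mod n) n" by (elim disjE) simp_all
  then show "coprime p n" using n0 by simp
qed

theorem mainTheorem3:
  fixes M n \<beta> :: nat
  assumes "M \<ge> 3" and "n \<ge> 3" and "odd n"
    and "\<beta> \<le> n" and "\<beta> \<noteq> 1"
  shows "(n - \<beta>, \<beta>) \<in> HWP (CMn_vertices M n) (CMn_edges M n) M (M * n)"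
proof -
  have n0: "n > 0" using assms(2) by linarith
  interpret L: lay M n "AA n M \<beta>"
  proof
    show "3 \<le> M" by fact
    show "0 < n" by fact
    fix i assume "i < M"
    show "bij_betw (AA n M \<beta> i) {..<n} {..<n}"
    proof (cases "i = 0")
      case True
      then have "AA n M \<beta> i = dd n \<beta>" by (simp add: AA_def fun_eq_iff)
      then show ?thesis using dd_bij[OF assms(4,5)] by simp
    next
      case False
      then have "AA n M \<beta> i = (\<lambda>k. (cc n M (i - 1) * k) mod n)" by (simp add: AA_def fun_eq_iff)
      then show ?thesis using mul_bij[OF cc_coprime[OF assms(3,2)] n0] by simp
    qed
  qed
  have PT: "[L.P k M + k = dd n \<beta> k] (mod n)" for k
  proof -
    have "L.P k M = (\<Sum>j<M. AA n M \<beta> j k)" by (simp only: L.P_def)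
    then show ?thesis using P_total[OF assms(1,2)] by simp
  qed
  have zero: "L.P k M mod n = 0" if "k < n - \<beta>" for k
    using zero_of PT[of k] dd_fix[OF that] by simp
  have unit: "coprime (L.P k M) n" if "n - \<beta> \<le> k" "k < n" for k
    using unit_of[OF assms(2,3) PT[of k] dd_move[OF assms(4,5) that]] .
  have ab: "n - \<beta> + \<beta> = n" using assms(4) by simp
  have c1: "\<forall>i<n - \<beta>. is_cycle_factor (CMn_vertices M n) (CMn_edges M n) M (L.F i)"
    using L.Mfactor zero by simp
  have c2: "\<forall>i. n - \<beta> \<le> i \<and> i < n - \<beta> + \<beta> \<longrightarrow> is_cycle_factor (CMn_vertices M n) (CMn_edges M n) (M * n) (L.F i)"
    using L.Mnfactor unit ab by simp
  have c3: "\<forall>i<n - \<beta> + \<beta>. \<forall>j<n - \<beta> + \<beta>. i \<noteq> j \<longrightarrow> L.F i \<inter> L.F j = {}"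
    using L.F_disj ab by simp
  have c4: "(\<Union>i<n - \<beta> + \<beta>. L.F i) = CMn_edges M n" using L.F_union ab by simp
  show ?thesis unfolding HWP_def using c1 c2 c3 c4 by blast
qed

end
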